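(* Let $m\ge1$, $d\ge1$ and let $A_0,\ldots,A_{m-1}$ be $d\times d$ real matrices. Let $V=\bigoplus_{i=0}^{2m-2}\mathbb{R}^d$, let $V_i\subseteq V$ be the subspace of vectors vanishing in every summand except possibly the $i$-th ($i=0,\ldots,2m-2$), and define linear maps $B_0,B_1\colon V\to V$ by \[B_0(v_0\oplus \cdots \oplus v_{2m-2}):=v_1 \oplus \cdots \oplus v_{2m-2} \oplus 0,\] \[B_1(v_0 \oplus \cdots \oplus v_{2m-2}):= 0 \oplus \cdots \oplus 0 \oplus A_0v_0 \oplus A_1v_1 \oplus \cdots \oplus A_{m-1}v_{m-1}\] (in the second formula the first $m-1$ summands are $0$, and $A_jv_j$ sits in summand $m-1+j$). Let $x=x_1x_2\cdots \in \{0,1\}^{\mathbb{N}}$ and suppose that $B_{x_n}\cdots B_{x_1} V_{m-1} \neq \{0\}$ for every $n \geq 1$. Then for every integer $n \geq 0$ exactly one of the symbols $x_{mn+1},\ldots,x_{m(n+1)}$ is equal to $1$, and the remainder are $0$. *)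

theory Defs
  imports "HOL-Analysis.Analysis"
begin

text \<open>The space V = direct sum of R^d over summands i = 0..2m-2 is represented by
  functions v :: nat => real^'d that vanish at every index i > 2m-2.\<close>

definition Vsp :: "nat \<Rightarrow> (nat \<Rightarrow> real^'d) set" where
  "Vsp m = {v. \<forall>i. i > 2*m - 2 \<longrightarrow> v i = 0}"

definition Vsub :: "nat \<Rightarrow> nat \<Rightarrow> (nat \<Rightarrow> real^'d) set" where
  "Vsub m i = {v \<in> Vsp m. \<forall>j. j \<noteq> i \<longrightarrow> v j = 0}"

definition B0 :: "nat \<Rightarrow> (nat \<Rightarrow> real^'d) \<Rightarrow> (nat \<Rightarrow> real^'d)" where
  "B0 m v = (\<lambda>i. if i < 2*m - 2 then v (i+1) else 0)"

definition B1 :: "nat \<Rightarrow> (nat \<Rightarrow> real^'d^'d) \<Rightarrow> (nat \<Rightarrow> real^'d) \<Rightarrow> (nat \<Rightarrow> real^'d)" where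
  "B1 m A v = (\<lambda>i. if m - 1 \<le> i \<and> i \<le> 2*m - 2
                    then A (i - (m - 1)) *v v (i - (m - 1)) else 0)"

definition Bsym :: "nat \<Rightarrow> (nat \<Rightarrow> real^'d^'d) \<Rightarrow> nat \<Rightarrow> (nat \<Rightarrow> real^'d) \<Rightarrow> (nat \<Rightarrow> real^'d)" where
  "Bsym m A s = (if s = 0 then B0 m else B1 m A)"

primrec word_map :: "nat \<Rightarrow> (nat \<Rightarrow> real^'d^'d) \<Rightarrow> (nat \<Rightarrow> nat) \<Rightarrow> nat \<Rightarrow> (nat \<Rightarrow> real^'d) \<Rightarrow> (nat \<Rightarrow> real^'d)" where
  "word_map m A x 0 = id"
| "word_map m A x (Suc n) = Bsym m A (x (Suc n)) \<circ> word_map m A x n"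

end

theory Submission
  imports Defs
begin

primrec pos :: "nat \<Rightarrow> (nat\<Rightarrow>nat) \<Rightarrow> nat \<Rightarrow> int" where
  "pos m x 0 = int m - 1"
| "pos m x (Suc n) = (if x (Suc n) = 0 then pos m x n - 1 else pos m x n + (int m - 1))"

lemma supp:
  assumes "m \<ge> 1" "v \<in> Vsub m (m - 1)"
  shows "int j \<noteq> pos m x n \<Longrightarrow> word_map m A x n v j = 0"
proof (induction n arbitrary: j)
  case 0
  then show ?case using assms by (auto simp: Vsub_def)
next
  case (Suc n)
  show ?case
  proof (cases "x (Suc n) = 0")
    case True
    then show ?thesis using Suc.prems Suc.IH[of "j+1"] by (auto simp: Bsym_def B0_def)
  next
    case False
    then show ?thesis using Suc.prems Suc.IH[of "j-(m-1)"] assms(1) by (auto simp: Bsym_def B1_def of_nat_diff)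
  qed
qed

lemma nonz:
  assumes "m \<ge> 1" "v \<in> Vsub m (m - 1)" "word_map m A x (Suc n) v \<noteq> (\<lambda>_. 0)"
  shows "word_map m A x n v \<noteq> (\<lambda>_. 0) \<and> 0 \<le> pos m x (Suc n) \<and>
     (x (Suc n) = 0 \<longrightarrow> pos m x n \<ge> 1) \<and> (x (Suc n) \<noteq> 0 \<longrightarrow> pos m x n \<le> int m - 1)"
proof -
  obtain i where i: "word_map m A x (Suc n) v i \<noteq> 0" using assms(3) by auto
  have pi: "int i = pos m x (Suc n)" using supp[OF assms(1,2)] i by blast
  show ?thesis
  proof (cases "x (Suc n) = 0")
    case True
    then have "i < 2*m-2 \<and> word_map m A x n v (i+1) \<noteq> 0" using i by (auto simp: Bsym_def B0_def split: if_splits)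
    moreover then have "int (i+1) = pos m x n" using supp[OF assms(1,2)] by blast
    ultimately show ?thesis using pi True by auto
  next
    case False
    then have "m-1 \<le> i \<and> i \<le> 2*m-2 \<and> word_map m A x n v (i-(m-1)) \<noteq> 0" using i
      by (auto simp: Bsym_def B1_def split: if_splits)
    moreover then have "int (i-(m-1)) = pos m x n" using supp[OF assms(1,2)] by blast
    ultimately show ?thesis using pi False assms(1) by auto
  qed
qed

lemma block:
  fixes p :: "nat \<Rightarrow> int" and m :: nat
  assumes m: "m \<ge> 1"
    and a: "\<And>n. 0 \<le> p n"
    and b: "\<And>n. x (Suc n) \<in> {0,1}"
    and c: "\<And>n. x (Suc n) = 0 \<Longrightarrow> p (Suc n) = p n - 1"
    and d: "\<And>n. x (Suc n) = 1 \<Longrightarrow> p n \<le> int m - 1 \<and> p (Suc n) = p n + (int m - 1)"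
    and st: "p s = int m - 1"
  shows "p (s+m) = int m - 1 \<and> (\<exists>j\<in>{s+1..s+m}. x j = 1 \<and> (\<forall>k\<in>{s+1..s+m}. k \<noteq> j \<longrightarrow> x k = 0))"
proof -
  have L1: "k \<le> m \<Longrightarrow> (\<forall>i. 1\<le>i \<and> i\<le>k \<longrightarrow> x(s+i)=0) \<Longrightarrow> p(s+k) = int m-1-int k" for k
  proof (induction k)
    case 0 then show ?case using st by simp
  next
    case (Suc k)
    then have "x (Suc (s+k)) = 0" using Suc.prems(2)[rule_format, of "Suc k"] by simp
    then show ?case using Suc c[of "s+k"] by auto
  qed
  have ex: "\<exists>i. 1\<le>i \<and> i\<le>m \<and> x(s+i)=1"
  proof (rule ccontr)
    assume na: "\<not> ?thesis"
    have "\<forall>i. 1\<le>i \<and> i\<le>m \<longrightarrow> x(s+i)=0"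
    proof (intro allI impI)
      fix i assume i: "1\<le>i \<and> i\<le>m"
      have "x(s+i) \<in> {0,1}" using b[of "s+i-1"] i by simp
      then show "x(s+i)=0" using na i by auto
    qed
    then have "p(s+m) = -1" using L1[of m] by auto
    then show False using a[of "s+m"] by simp
  qed
  define t where "t = (LEAST i. 1\<le>i \<and> i\<le>m \<and> x(s+i)=1)"
  have t: "1\<le>t \<and> t\<le>m \<and> x(s+t)=1" unfolding t_def using ex by (rule LeastI_ex)
  have tmin: "\<And>i. 1\<le>i \<and> i\<le>m \<and> x(s+i)=1 \<Longrightarrow> t \<le> i" unfolding t_def by (rule Least_le)
  have before: "\<forall>i. 1\<le>i \<and> i\<le>t-1 \<longrightarrow> x(s+i)=0"
  proof (intro allI impI)
    fix i assume "1\<le>i \<and> i\<le>t-1"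
    moreover have "x(s+i) \<in> {0,1}" using b[of "s+i-1"] calculation by simp
    ultimately show "x(s+i)=0" using tmin[of i] t by force
  qed
  have pt1: "p(s+(t-1)) = int m - int t" using L1[of "t-1"] before t by auto
  have st1: "Suc (s+(t-1)) = s+t" using t by simp
  have pt: "p(s+t) = 2*int m - 1 - int t" using d[of "s+(t-1)"] t pt1 st1 by simp
  have L2: "t+k \<le> m \<Longrightarrow> p(s+t+k) = 2*int m-1-int t-int k \<and> (\<forall>i. 1\<le>i \<and> i\<le>k \<longrightarrow> x(s+t+i)=0)" for k
  proof (induction k)
    case 0 then show ?case using pt by simp
  next
    case (Suc k)
    then have IH: "p(s+t+k) = 2*int m-1-int t-int k" "\<forall>i. 1\<le>i \<and> i\<le>k \<longrightarrow> x(s+t+i)=0" by auto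
    have "x (Suc (s+t+k)) \<noteq> 1" using d[of "s+t+k"] IH(1) Suc.prems by auto
    then have x0: "x (Suc (s+t+k)) = 0" using b[of "s+t+k"] by auto
    then have "p(s+t+Suc k) = 2*int m-1-int t-int (Suc k)" using c[of "s+t+k"] IH(1) by simp
    moreover have "\<forall>i. 1\<le>i \<and> i\<le>Suc k \<longrightarrow> x(s+t+i)=0"
      using IH(2) x0 by (auto simp: le_Suc_eq)
    ultimately show ?case by blast
  qed
  have fin: "p(s+t+(m-t)) = 2*int m-1-int t-int (m-t)" "\<forall>i. 1\<le>i \<and> i\<le>m-t \<longrightarrow> x(s+t+i)=0"
    using L2[of "m-t"] t by auto
  have "p(s+m) = int m - 1" using fin(1) t by (simp add: of_nat_diff)
  moreover have "\<forall>k\<in>{s+1..s+m}. k \<noteq> s+t \<longrightarrow> x k = 0"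
  proof
    fix k assume k: "k\<in>{s+1..s+m}"
    show "k \<noteq> s+t \<longrightarrow> x k = 0"
    proof
      assume "k \<noteq> s+t"
      then have "k < s+t \<or> k > s+t" by auto
      then show "x k = 0"
      proof
        assume "k < s+t" then have "1 \<le> k-s \<and> k-s \<le> t-1" using k by auto
        then show ?thesis using before[rule_format, of "k-s"] k by simp
      next
        assume "k > s+t" then have "1 \<le> k-s-t \<and> k-s-t \<le> m-t" using k by auto
        moreover have "s+t+(k-s-t) = k" using \<open>k > s+t\<close> by simp
        ultimately show ?thesis using fin(2)[rule_format, of "k-s-t"] by simp
      qed
    qed
  qed
  ultimately show ?thesis using t by auto
qed

theorem lemma7:
  fixes m :: nat and A :: "nat \<Rightarrow> real^'d^'d" and x :: "nat \<Rightarrow> nat"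
  assumes "m \<ge> 1"
    and "\<And>k. k \<ge> 1 \<Longrightarrow> x k \<in> {0, 1}"
    and "\<And>n. n \<ge> 1 \<Longrightarrow> word_map m A x n ` Vsub m (m - 1) \<noteq> {\<lambda>_. 0}"
  shows "\<forall>n::nat. \<exists>j\<in>{m*n+1..m*(n+1)}. x j = 1 \<and>
           (\<forall>k\<in>{m*n+1..m*(n+1)}. k \<noteq> j \<longrightarrow> x k = 0)"
proof -
  have z: "(\<lambda>_. 0) \<in> Vsub m (m - 1)" by (simp add: Vsub_def Vsp_def)
  have alive: "\<exists>v\<in>Vsub m (m-1). word_map m A x n v \<noteq> (\<lambda>_. 0)" if "n \<ge> 1" for n
  proof (rule ccontr)
    assume "\<not> ?thesis"
    then have "word_map m A x n ` Vsub m (m - 1) = {\<lambda>_. 0}" using z by auto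
    then show False using assms(3) that by blast
  qed
  have facts: "0 \<le> pos m x (Suc n) \<and>
     (x (Suc n) = 0 \<longrightarrow> pos m x n \<ge> 1) \<and> (x (Suc n) \<noteq> 0 \<longrightarrow> pos m x n \<le> int m - 1)" for n
  proof -
    obtain v where "v\<in>Vsub m (m-1)" "word_map m A x (Suc n) v \<noteq> (\<lambda>_. 0)" using alive[of "Suc n"] by auto
    then show ?thesis using nonz[OF assms(1)] by blast
  qed
  have a: "0 \<le> pos m x n" for n
    using facts[of "n-1"] assms(1) by (cases n) auto
  have b: "x (Suc n) \<in> {0,1}" for n using assms(2) by simp
  have c: "x (Suc n) = 0 \<Longrightarrow> pos m x (Suc n) = pos m x n - 1" for n by simp
  have d: "x (Suc n) = 1 \<Longrightarrow> pos m x n \<le> int m - 1 \<and> pos m x (Suc n) = pos m x n + (int m - 1)" for n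
    using facts[of n] by simp
  have P: "pos m x (m*n) = int m - 1" for n
  proof (induction n)
    case 0 then show ?case by simp
  next
    case (Suc n)
    then show ?case using block[where p="pos m x" and x=x, OF assms(1) a b c d Suc] by (simp add: add.commute)
  qed
  show ?thesis
  proof
    fix n
    show "\<exists>j\<in>{m*n+1..m*(n+1)}. x j = 1 \<and> (\<forall>k\<in>{m*n+1..m*(n+1)}. k \<noteq> j \<longrightarrow> x k = 0)"
      using block[where p="pos m x" and x=x, OF assms(1) a b c d P[of n]] by (simp add: algebra_simps)
  qed
qed

end
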